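(* There exists $\theta_1\in(0,\pi/8)$, depending only on $\alpha$, such that for every $\theta\in(0,\theta_1)$ the following holds. If $p,q\in\mathbb H$ satisfy $z_q\le0$, $z_p\le0$, $\rho_q\le\rho_p$, $p,q\in\mathcal C(\theta)$, $q\notin B(p,r_p)$ and $p\notin B(q,r_q)$, then $z_q<2z_p$ and $\rho_q<\rho_p\cos(2\theta)$.
   Context: $\mathbb H=\mathbb R^3$, $p=(x_p,y_p,z_p)$, $\rho_p=\sqrt{x_p^2+y_p^2}$, group law $(x,y,z)\cdot(x',y',z')=(x+x',y+y',z+z'+\tfrac12(xy'-yx'))$, dilations $\delta_\lambda(x,y,z)=(\lambda x,\lambda y,\lambda^2z)$. Fix $\alpha>0$ such that $d_\alpha(p,q)=\inf\{r>0:\delta_{1/r}(p^{-1}\cdot q)\in B_\alpha\}$ is a distance, $B_\alpha$ the closed Euclidean ball of radius $\alpha$ at $0$. $B(p,r)=\{q:d_\alpha(q,p)\le r\}$, $r_p=d_\alpha(0,p)$. $\mathcal C(\theta)=\{p:|y_p|<x_p\tan\theta\}$. *)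

theory Defs
  imports "HOL-Analysis.Analysis"
begin

type_synonym heis = "real \<times> real \<times> real"

definition hmult :: "heis \<Rightarrow> heis \<Rightarrow> heis" where
  "hmult p q = (case p of (x, y, z) \<Rightarrow> case q of (x', y', z') \<Rightarrow>
      (x + x', y + y', z + z' + (x * y' - y * x') / 2))"

definition hinv :: "heis \<Rightarrow> heis" where
  "hinv p = (case p of (x, y, z) \<Rightarrow> (-x, -y, -z))"

definition hdil :: "real \<Rightarrow> heis \<Rightarrow> heis" where
  "hdil l p = (case p of (x, y, z) \<Rightarrow> (l * x, l * y, l^2 * z))"

definition xc :: "heis \<Rightarrow> real" where "xc p = fst p"
definition yc :: "heis \<Rightarrow> real" where "yc p = fst (snd p)"
definition zc :: "heis \<Rightarrow> real" where "zc p = snd (snd p)"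

definition rho :: "heis \<Rightarrow> real" where
  "rho p = sqrt ((xc p)^2 + (yc p)^2)"

definition Bball :: "real \<Rightarrow> heis set" where
  "Bball a = {p. sqrt ((xc p)^2 + (yc p)^2 + (zc p)^2) \<le> a}"

definition d_alpha :: "real \<Rightarrow> heis \<Rightarrow> heis \<Rightarrow> real" where
  "d_alpha a p q = Inf {r. r > 0 \<and> hdil (1 / r) (hmult (hinv p) q) \<in> Bball a}"

definition is_distance :: "(heis \<Rightarrow> heis \<Rightarrow> real) \<Rightarrow> bool" where
  "is_distance d \<longleftrightarrow>
     (\<forall>p q. 0 \<le> d p q) \<and> (\<forall>p q. d p q = 0 \<longleftrightarrow> p = q) \<and>
     (\<forall>p q. d p q = d q p) \<and> (\<forall>p q s. d p s \<le> d p q + d q s)"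

definition hball :: "real \<Rightarrow> heis \<Rightarrow> real \<Rightarrow> heis set" where
  "hball a p r = {q. d_alpha a q p \<le> r}"

definition rr :: "real \<Rightarrow> heis \<Rightarrow> real" where
  "rr a p = d_alpha a (0, 0, 0) p"

definition cone :: "real \<Rightarrow> heis set" where
  "cone \<theta> = {p. \<bar>yc p\<bar> < xc p * tan \<theta>}"

end

theory Submission
  imports Defs
begin


lemma dil_in_ball:
  assumes "\<alpha> > 0" "r > 0"
  shows "hdil (1/r) (a,b,c) \<in> Bball \<alpha> \<longleftrightarrow> (a^2+b^2)*r^2 + c^2 \<le> \<alpha>^2*r^4"
proof -
  have "hdil (1/r) (a,b,c) \<in> Bball \<alpha> \<longleftrightarrow> sqrt ((a/r)^2 + (b/r)^2 + (c/r^2)^2) \<le> \<alpha>"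
    by (simp add: hdil_def Bball_def xc_def yc_def zc_def power_divide)
  also have "\<dots> \<longleftrightarrow> (a/r)^2 + (b/r)^2 + (c/r^2)^2 \<le> \<alpha>^2"
    using assms by (simp add: real_sqrt_le_iff')
  also have "\<dots> \<longleftrightarrow> ((a/r)^2 + (b/r)^2 + (c/r^2)^2) * r^4 \<le> \<alpha>^2 * r^4"
    using assms by simp
  also have "((a/r)^2 + (b/r)^2 + (c/r^2)^2) * r^4 = (a^2+b^2)*r^2 + c^2"
    using assms by (simp add: field_simps power2_eq_square power4_eq_xxxx)
  finally show ?thesis .
qed

lemma dist_gt:
  assumes "\<alpha> > 0" "R > 0" "d_alpha \<alpha> u v > R" "hmult (hinv u) v = (a,b,c)"
  shows "(a^2+b^2)*R^2 + c^2 > \<alpha>^2*R^4"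
proof (rule ccontr)
  assume "\<not> ?thesis"
  hence "R \<in> {r. r > 0 \<and> hdil (1 / r) (hmult (hinv u) v) \<in> Bball \<alpha>}"
    using dil_in_ball[OF assms(1,2)] assms by auto
  moreover have "bdd_below {r. r > 0 \<and> hdil (1 / r) (hmult (hinv u) v) \<in> Bball \<alpha>}"
    by (rule bdd_belowI[where m=0]) auto
  ultimately have "d_alpha \<alpha> u v \<le> R" unfolding d_alpha_def by (rule cInf_lower)
  thus False using assms by simp
qed

lemma norm_attained:
  assumes "\<alpha> > 0" "a^2+b^2 > 0"
  shows "d_alpha \<alpha> (0,0,0) (a,b,c) > 0 \<and>
    (a^2+b^2)*(d_alpha \<alpha> (0,0,0) (a,b,c))^2 + c^2 \<le> \<alpha>^2*(d_alpha \<alpha> (0,0,0) (a,b,c))^4"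
proof -
  define S where "S = {r. r > 0 \<and> hdil (1 / r) (hmult (hinv (0,0,0)) (a,b,c)) \<in> Bball \<alpha>}"
  define m where "m = sqrt (a^2+b^2) / \<alpha>"
  have m0: "m > 0" using assms by (simp add: m_def)
  have hm: "hmult (hinv (0,0,0)) (a,b,c) = (a,b,c)" by (simp add: hmult_def hinv_def)
  have lb: "r \<ge> m" if "r > 0" "(a^2+b^2)*r^2 + c^2 \<le> \<alpha>^2*r^4" for r
  proof -
    have "r^4 = r^2*r^2" by (simp add: power4_eq_xxxx power2_eq_square)
    hence "(a^2+b^2)*r^2 \<le> (\<alpha>^2*r^2) * r^2" using that(2) by (smt (verit) mult.assoc zero_le_power2)
    hence "a^2+b^2 \<le> \<alpha>^2*r^2" using that by simp
    hence "sqrt (a^2+b^2) \<le> sqrt ((\<alpha>*r)^2)" by (simp add: power_mult_distrib)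
    hence "sqrt (a^2+b^2) \<le> \<alpha>*r" using assms that by simp
    thus ?thesis using assms by (simp add: m_def divide_le_eq mult.commute)
  qed
  have S_eq: "S = {r. m \<le> r \<and> (a^2+b^2)*r^2 + c^2 \<le> \<alpha>^2*r^4}"
    unfolding S_def hm using dil_in_ball[OF assms(1)] lb m0
    by auto
  have cl: "closed S" unfolding S_eq
    by (intro closed_Collect_conj closed_Collect_le continuous_intros)
  have ne: "S \<noteq> {}"
  proof -
    define K where "K = a^2+b^2+c^2"
    define r where "r = max 1 (max m (K / \<alpha>^2))"
    have r1: "r \<ge> 1" "r \<ge> m" "r \<ge> K / \<alpha>^2" by (auto simp: r_def)
    have "K \<le> \<alpha>^2 * r" using r1(3) assms by (simp add: divide_le_eq mult.commute)
    also have "\<dots> \<le> \<alpha>^2 * r^2" using r1 by (intro mult_left_mono) (auto simp: power2_eq_square)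
    finally have k: "K \<le> \<alpha>^2 * r^2" .
    have "(a^2+b^2)*r^2 + c^2 \<le> (a^2+b^2)*r^2 + c^2 * r^2"
    proof -
      have "1 \<le> r^2" using r1 by (simp add: one_le_power)
      hence "c^2 * 1 \<le> c^2 * r^2" by (intro mult_left_mono) auto
      thus ?thesis by simp
    qed
    also have "\<dots> = K * r^2" by (simp add: K_def algebra_simps)
    also have "\<dots> \<le> \<alpha>^2 * r^2 * r^2" using k by (intro mult_right_mono) auto
    also have "\<dots> = \<alpha>^2 * r^4" by (simp add: power4_eq_xxxx power2_eq_square)
    finally have "r \<in> S" unfolding S_eq using r1 by simp
    thus ?thesis by auto
  qed
  have bb: "bdd_below S" unfolding S_def by (rule bdd_belowI[where m=0]) auto
  have "Inf S \<in> S" using closed_contains_Inf[OF ne bb cl] .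
  moreover have "d_alpha \<alpha> (0,0,0) (a,b,c) = Inf S" unfolding S_def d_alpha_def ..
  ultimately show ?thesis using m0 unfolding S_eq by auto
qed



lemma core:
  fixes T \<alpha> x1 y1 Z1 x2 y2 Z2 N M :: real
  assumes T0: "T > 0" and Tb: "8*T*(\<alpha>+1) \<le> 1" and a0: "\<alpha> > 0"
    and x1: "x1 > 0" and x2: "x2 > 0" and y1: "\<bar>y1\<bar> \<le> T*x1" and y2: "\<bar>y2\<bar> \<le> T*x2"
    and Z1: "Z1 \<ge> 0" and Z2: "Z2 \<ge> 0" and rr: "x2^2+y2^2 \<le> x1^2+y1^2"
    and N0: "N > 0" and M0: "M > 0"
    and Np: "(x1^2+y1^2)*N^2 + Z1^2 \<le> \<alpha>^2*N^4"
    and Mq: "(x2^2+y2^2)*M^2 + Z2^2 \<le> \<alpha>^2*M^4"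
    and cp: "((x1-x2)^2+(y1-y2)^2)*N^2 + (Z2-Z1+(x1*y2-y1*x2)/2)^2 > \<alpha>^2*N^4"
    and cq: "((x2-x1)^2+(y2-y1)^2)*M^2 + (Z1-Z2-(x1*y2-y1*x2)/2)^2 > \<alpha>^2*M^4"
  shows "Z2 > 2*Z1 \<and> sqrt (x2^2+y2^2) < (1-2*T^2) * sqrt (x1^2+y1^2)"
proof -
  define K where "K = x1*y2 - y1*x2"
  define rp where "rp = sqrt (x1^2+y1^2)"
  define rq where "rq = sqrt (x2^2+y2^2)"
  define C where "C = 1 - 2*T^2"
  define D where "D = (x1-x2)^2+(y1-y2)^2"
  define c where "c = Z2-Z1+K/2"
  have Ta0: "T*\<alpha> > 0" using T0 a0 by simp
  have Ta: "T*\<alpha> \<le> 1/8" "T \<le> 1/8" using Tb Ta0 T0 by (auto simp: algebra_simps)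
  have Ta2: "(T*\<alpha>)^2 \<le> 1/64" proof -
    have "(T*\<alpha>)^2 \<le> (1/8)^2" using Ta(1) Ta0 by (intro power_mono) auto
    thus ?thesis by (simp add: power_divide)
  qed
  have T2: "T^2 \<le> 1/64" proof -
    have "T^2 \<le> (1/8)^2" using Ta(2) T0 by (intro power_mono) auto
    thus ?thesis by (simp add: power_divide)
  qed
  have C0: "C \<ge> 31/32" using T2 by (simp add: C_def)
  have rp2: "rp^2 = x1^2+y1^2" and rq2: "rq^2 = x2^2+y2^2" by (simp_all add: rp_def rq_def)
  have x1r: "x1 \<le> rp" unfolding rp_def by (rule real_le_rsqrt) simp
  have x2r: "x2 \<le> rq" unfolding rq_def by (rule real_le_rsqrt) simp
  have rp0: "rp > 0" using x1 x1r by linarith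
  have rq0: "rq > 0" using x2 x2r by linarith
  have rqp: "rq \<le> rp" using rr by (simp add: rp_def rq_def)
  have D_eq: "D = rp^2 + rq^2 - 2*(x1*x2+y1*y2)" unfolding rp2 rq2 by (simp add: D_def power2_eq_square algebra_simps)
  have "\<bar>K\<bar> \<le> \<bar>x1\<bar>*\<bar>y2\<bar> + \<bar>y1\<bar>*\<bar>x2\<bar>" unfolding K_def by (simp add: abs_mult[symmetric] abs_triangle_ineq4)
  also have "\<dots> \<le> x1*(T*x2) + (T*x1)*x2" using x1 x2 y1 y2 by (intro add_mono mult_mono) auto
  finally have K1: "\<bar>K\<bar> \<le> 2*T*(x1*x2)" by (simp add: algebra_simps)
  have "x1*x2 \<le> rp*rq" using x1r x2r x1 x2 by (intro mult_mono) auto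
  hence "2*T*(x1*x2) \<le> 2*T*(rp*rq)" using T0 by (intro mult_left_mono) auto
  hence Kb: "\<bar>K\<bar> \<le> 2*T*(rp*rq)" using K1 by linarith
  have "\<bar>y1*y2\<bar> \<le> (T*x1)*(T*x2)" using y1 y2 by (simp add: abs_mult mult_mono)
  hence ip1: "x1*x2+y1*y2 \<ge> (1-T^2)*(x1*x2)" by (simp add: power2_eq_square algebra_simps)
  have "rp^2 \<le> (1+T^2)*x1^2"
  proof -
    have "\<bar>y1\<bar>^2 \<le> (T*x1)^2" using y1 by (intro power_mono) auto
    hence "y1^2 \<le> (T*x1)^2" by simp
    thus ?thesis by (simp add: rp2 algebra_simps power_mult_distrib)
  qed
  moreover have "rq^2 \<le> (1+T^2)*x2^2"
  proof -
    have "\<bar>y2\<bar>^2 \<le> (T*x2)^2" using y2 by (intro power_mono) auto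
    hence "y2^2 \<le> (T*x2)^2" by simp
    thus ?thesis by (simp add: rq2 algebra_simps power_mult_distrib)
  qed
  ultimately have "rp^2*rq^2 \<le> ((1+T^2)*x1^2)*((1+T^2)*x2^2)"
    by (intro mult_mono) (simp_all add: add_nonneg_nonneg)
  moreover have "((1+T^2)*x1^2)*((1+T^2)*x2^2) = ((1+T^2)*(x1*x2))^2" "rp^2*rq^2 = (rp*rq)^2"
    by (simp_all add: power_mult_distrib power2_eq_square)
  ultimately have "(rp*rq)^2 \<le> ((1+T^2)*(x1*x2))^2" by simp
  moreover have "0 \<le> (1+T^2)*(x1*x2)" using x1 x2 by (simp add: add_nonneg_nonneg)
  ultimately have rx: "rp*rq \<le> (1+T^2)*(x1*x2)" by (rule power2_le_imp_le)
  have "C*(rp*rq) \<le> C*((1+T^2)*(x1*x2))" using rx C0 by (intro mult_left_mono) auto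
  also have "\<dots> = (1-T^2-2*T^4)*(x1*x2)" by (simp add: C_def algebra_simps power4_eq_xxxx power2_eq_square)
  also have "\<dots> \<le> (1-T^2)*(x1*x2)" using x1 x2 by (intro mult_right_mono) (simp_all add: zero_le_even_power)
  finally have ip: "x1*x2+y1*y2 \<ge> C*(rp*rq)" using ip1 by linarith
  have n4: "\<alpha>^2*N^4 = (\<alpha>*N^2)^2" "\<alpha>^2*N^4 = (\<alpha>^2*N^2)*N^2"
     "\<alpha>^2*M^4 = (\<alpha>*M^2)^2" "\<alpha>^2*M^4 = (\<alpha>^2*M^2)*M^2"
    by (simp_all add: power_mult_distrib power4_eq_xxxx power2_eq_square)
  have "rp^2*N^2 \<ge> 0" "rq^2*M^2 \<ge> 0" by auto
  hence A: "Z1^2 \<le> (\<alpha>*N^2)^2" "rp^2*N^2 \<le> (\<alpha>^2*N^2)*N^2"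
      "Z2^2 \<le> (\<alpha>*M^2)^2" "rq^2*M^2 \<le> (\<alpha>^2*M^2)*M^2"
  proof -
    have Np': "rp^2*N^2 + Z1^2 \<le> \<alpha>^2*N^4" using Np rp2 by simp
    have Mq': "rq^2*M^2 + Z2^2 \<le> \<alpha>^2*M^4" using Mq rq2 by simp
    show "Z1^2 \<le> (\<alpha>*N^2)^2" "rp^2*N^2 \<le> (\<alpha>^2*N^2)*N^2"
      "Z2^2 \<le> (\<alpha>*M^2)^2" "rq^2*M^2 \<le> (\<alpha>^2*M^2)*M^2"
      using Np' Mq' n4 \<open>rp^2*N^2 \<ge> 0\<close> \<open>rq^2*M^2 \<ge> 0\<close> zero_le_power2[of Z1] zero_le_power2[of Z2] by linarith+
  qed
  have Zp: "Z1 \<le> \<alpha>*N^2" using a0 by (intro power2_le_imp_le[OF A(1)]) simp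
  have rpN: "rp^2 \<le> \<alpha>^2*N^2" using N0 by (intro mult_right_le_imp_le[OF A(2)]) simp
  have Zq: "Z2 \<le> \<alpha>*M^2" using a0 by (intro power2_le_imp_le[OF A(3)]) simp
  have rqM: "rq^2 \<le> \<alpha>^2*M^2" using M0 by (intro mult_right_le_imp_le[OF A(4)]) simp
  have Dc: "D*N^2 + c^2 > \<alpha>^2*N^4" using cp by (simp add: D_def c_def K_def)
  have Dc2: "D*M^2 + c^2 > \<alpha>^2*M^4"
  proof -
    have "(Z1-Z2-K/2)^2 = c^2" unfolding c_def by (simp add: power2_eq_square algebra_simps)
    moreover have "(x2-x1)^2+(y2-y1)^2 = D" unfolding D_def by (simp add: power2_eq_square algebra_simps)
    ultimately show ?thesis using cq by (simp add: K_def)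
  qed
  have K2: "K^2 \<le> 4*T^2*(rp*rq)^2"
  proof -
    have "K^2 = \<bar>K\<bar>^2" by simp
    also have "\<dots> \<le> (2*T*(rp*rq))^2" using Kb by (intro power_mono) auto
    finally show ?thesis by (simp add: power_mult_distrib)
  qed
  have g1: "Z2 > 2*Z1"
  proof (rule ccontr)
    assume "\<not> ?thesis"
    hence zz: "\<bar>Z2-Z1\<bar> \<le> Z1" using Z1 Z2 by linarith
    have "\<bar>c\<bar> \<le> \<bar>Z2-Z1\<bar> + \<bar>K\<bar>/2" unfolding c_def
      using abs_triangle_ineq[of "Z2-Z1" "K/2"] by simp
    hence "\<bar>c\<bar> \<le> Z1 + \<bar>K\<bar>/2" using zz by linarith
    hence "\<bar>c\<bar>^2 \<le> (Z1 + \<bar>K\<bar>/2)^2" by (intro power_mono) auto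
    hence c2: "c^2 - Z1^2 \<le> Z1*\<bar>K\<bar> + K^2/4" by (simp add: power2_eq_square algebra_simps abs_mult_self_eq)
    define P where "P = rp*rq*N^2"
    have P0: "P > 0" using rp0 rq0 N0 by (simp add: P_def)
    have "rq^2 \<le> rp*rq" using rqp rq0 by (simp add: power2_eq_square)
    hence "D - rp^2 \<le> (1-2*C)*(rp*rq)" using D_eq ip by (simp add: algebra_simps)
    hence "(D - rp^2)*N^2 \<le> ((1-2*C)*(rp*rq))*N^2" by (rule mult_right_mono) simp
    hence h1: "(D - rp^2)*N^2 \<le> (1-2*C)*P" by (simp add: P_def mult.assoc)
    have "Z1*\<bar>K\<bar> \<le> (\<alpha>*N^2)*(2*T*(rp*rq))" using Zp Kb Z1 by (intro mult_mono) auto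
    hence h2: "Z1*\<bar>K\<bar> \<le> 2*(T*\<alpha>)*P" by (simp add: P_def algebra_simps)
    have "(rp*rq)^2 \<le> (rp*rq)*rp^2" using rqp rp0 rq0 by (simp add: power2_eq_square)
    also have "\<dots> \<le> (rp*rq)*(\<alpha>^2*N^2)" using rpN rp0 rq0 by (intro mult_left_mono) auto
    finally have "4*T^2*(rp*rq)^2 \<le> 4*T^2*((rp*rq)*(\<alpha>^2*N^2))" by (intro mult_left_mono) auto
    hence h3: "K^2 \<le> 4*(T*\<alpha>)^2*P" using K2 by (simp add: P_def power_mult_distrib algebra_simps)
    have Np': "rp^2*N^2 + Z1^2 \<le> \<alpha>^2*N^4" using Np rp2 by simp
    have "(D - rp^2)*N^2 = D*N^2 - rp^2*N^2" by (simp add: algebra_simps)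
    hence "(D - rp^2)*N^2 + (c^2 - Z1^2) > 0" using Dc Np' by linarith
    moreover have "(2*C-1 - 2*(T*\<alpha>) - (T*\<alpha>)^2)*P = 2*C*P - P - 2*(T*\<alpha>)*P - (T*\<alpha>)^2*P"
      by (simp add: algebra_simps)
    moreover have "(1-2*C)*P = P - 2*C*P" by (simp add: algebra_simps)
    ultimately have "(2*C-1 - 2*(T*\<alpha>) - (T*\<alpha>)^2)*P < 0" using h1 h2 h3 c2 by linarith
    moreover have "2*C-1 - 2*(T*\<alpha>) - (T*\<alpha>)^2 > 0" using C0 Ta Ta2 by simp
    ultimately show False using P0 by (smt (verit) mult_pos_pos)
  qed
  have g2: "rq < C*rp"
  proof (rule ccontr)
    assume "\<not> ?thesis"
    hence rqC: "C*rp \<le> rq" by simp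
    have zz: "\<bar>Z2-Z1\<bar> \<le> Z2" using Z1 Z2 g1 by linarith
    have "\<bar>c\<bar> \<le> \<bar>Z2-Z1\<bar> + \<bar>K\<bar>/2" unfolding c_def
      using abs_triangle_ineq[of "Z2-Z1" "K/2"] by simp
    hence "\<bar>c\<bar> \<le> Z2 + \<bar>K\<bar>/2" using zz by linarith
    hence "\<bar>c\<bar>^2 \<le> (Z2 + \<bar>K\<bar>/2)^2" by (intro power_mono) auto
    hence c2: "c^2 - Z2^2 \<le> Z2*\<bar>K\<bar> + K^2/4" by (simp add: power2_eq_square algebra_simps abs_mult_self_eq)
    define Q where "Q = rp^2*M^2"
    have Q0: "Q > 0" using rp0 M0 by (simp add: Q_def)
    have "C*rp*rp \<le> rq*rp" using rqC rp0 by (intro mult_right_mono) simp_all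
    hence "C*(C*rp*rp) \<le> C*(rq*rp)" using C0 by (intro mult_left_mono) simp_all
    hence "D - rq^2 \<le> (1-2*C^2)*rp^2" using D_eq ip by (simp add: algebra_simps power2_eq_square)
    hence "(D - rq^2)*M^2 \<le> ((1-2*C^2)*rp^2)*M^2" by (rule mult_right_mono) simp
    hence h1: "(D - rq^2)*M^2 \<le> (1-2*C^2)*Q" by (simp add: Q_def mult.assoc)
    have rr2: "rp*rq \<le> rp*rp" using rqp rp0 by (intro mult_left_mono) simp_all
    have "2*T*(rp*rq) \<le> 2*T*(rp*rp)" using mult_left_mono[OF rr2, of "2*T"] T0 by simp
    hence "\<bar>K\<bar> \<le> 2*T*(rp*rp)" using Kb by linarith
    hence "Z2*\<bar>K\<bar> \<le> (\<alpha>*M^2)*(2*T*(rp*rp))" using Zq Z2 a0 by (intro mult_mono) simp_all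
    hence h2: "Z2*\<bar>K\<bar> \<le> 2*(T*\<alpha>)*Q" by (simp add: Q_def algebra_simps power2_eq_square)
    have "rp*rq \<le> rp*rp" using rqp rp0 by (intro mult_left_mono) simp_all
    hence "(rp*rq)^2 \<le> (rp*rp)^2" using rp0 rq0 by (intro power_mono) simp_all
    hence "C^2*(rp*rq)^2 \<le> C^2*(rp*rp)^2" by (intro mult_left_mono) simp_all
    also have "\<dots> = rp^2 * (C*rp)^2" by (simp add: power2_eq_square algebra_simps)
    also have "\<dots> \<le> rp^2 * rq^2"
    proof -
      have "(C*rp)^2 \<le> rq^2" using rqC C0 rp0 by (intro power_mono) simp_all
      thus ?thesis by (intro mult_left_mono) simp_all
    qed
    also have "\<dots> \<le> rp^2 * (\<alpha>^2*M^2)" using rqM by (intro mult_left_mono) simp_all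
    finally have "4*T^2*(C^2*(rp*rq)^2) \<le> 4*T^2*(rp^2 * (\<alpha>^2*M^2))" by (intro mult_left_mono) simp_all
    moreover have "C^2*K^2 \<le> C^2*(4*T^2*(rp*rq)^2)" using K2 by (intro mult_left_mono) simp_all
    ultimately have h3: "C^2*K^2 \<le> 4*(T*\<alpha>)^2*Q" by (simp add: Q_def power_mult_distrib algebra_simps)
    have Mq': "rq^2*M^2 + Z2^2 \<le> \<alpha>^2*M^4" using Mq rq2 by simp
    have "(D - rq^2)*M^2 = D*M^2 - rq^2*M^2" by (simp add: algebra_simps)
    hence "(D - rq^2)*M^2 + (c^2 - Z2^2) > 0" using Dc2 Mq' by linarith
    hence "0 < (1-2*C^2)*Q + (Z2*\<bar>K\<bar> + K^2/4)" using h1 c2 by linarith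
    hence "0 < (1-2*C^2)*Q + (2*(T*\<alpha>)*Q + K^2/4)" using h2 by linarith
    moreover have "(1-2*C^2)*Q + (2*(T*\<alpha>)*Q + K^2/4) = 2*(T*\<alpha>)*Q + K^2/4 - (2*C^2-1)*Q"
      by (simp add: algebra_simps)
    ultimately have "(2*C^2-1)*Q < 2*(T*\<alpha>)*Q + K^2/4" by linarith
    hence "C^2*((2*C^2-1)*Q) < C^2*(2*(T*\<alpha>)*Q + K^2/4)" using C0 by (intro mult_strict_left_mono) simp_all
    moreover have "C^2*((2*C^2-1)*Q) = (C^2*(2*C^2-1 - 2*(T*\<alpha>)) - (T*\<alpha>)^2)*Q + C^2*(2*(T*\<alpha>)*Q) + (T*\<alpha>)^2*Q"
      by (simp add: algebra_simps)
    moreover have "C^2*(2*(T*\<alpha>)*Q + K^2/4) = C^2*(2*(T*\<alpha>)*Q) + (C^2*K^2)/4" by (simp add: algebra_simps)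
    ultimately have "(C^2*(2*C^2-1 - 2*(T*\<alpha>)) - (T*\<alpha>)^2)*Q < 0" using h3 by linarith
    moreover have "C^2*(2*C^2-1 - 2*(T*\<alpha>)) - (T*\<alpha>)^2 > 0"
    proof -
      have "(31/32)^2 \<le> C^2" using C0 by (intro power_mono) simp_all
      hence u: "C^2 \<ge> 9/10" by (simp add: power_divide)
      have "2*C^2-1 - 2*(T*\<alpha>) \<ge> 1/2" using u Ta by simp
      hence "C^2*(2*C^2-1 - 2*(T*\<alpha>)) \<ge> (9/10)*(1/2)" using u by (intro mult_mono) auto
      thus ?thesis using Ta2 by simp
    qed
    ultimately show False using Q0 by (smt (verit) mult_pos_pos)
  qed
  show ?thesis using g1 g2 by (simp add: rp_def rq_def C_def)
qed

lemma tan_bound: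
  assumes "0 < \<theta>" "\<theta> < pi/2"
  shows "1 - 2*(tan \<theta>)^2 \<le> cos (2*\<theta>)"
proof -
  have c0: "cos \<theta> > 0" using assms by (intro cos_gt_zero_pi) auto
  have c1: "(cos \<theta>)^2 \<le> 1" using sin_cos_squared_add[of \<theta>] zero_le_power2[of "sin \<theta>"] by linarith
  have "(sin \<theta>)^2 = (tan \<theta>)^2 * (cos \<theta>)^2" using c0 by (simp add: tan_def power_divide)
  also have "\<dots> \<le> (tan \<theta>)^2 * 1" using c1 by (intro mult_left_mono) simp_all
  finally show ?thesis by (simp add: cos_double_sin)
qed

lemma cone_pos:
  assumes "p \<in> cone \<theta>" "0 < \<theta>" "\<theta> < pi/2"
  shows "xc p > 0" "\<bar>yc p\<bar> \<le> tan \<theta> * xc p"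
proof -
  have t: "tan \<theta> > 0" using assms by (intro tan_gt_zero) auto
  have h: "\<bar>yc p\<bar> < xc p * tan \<theta>" using assms(1) by (simp add: cone_def)
  show "xc p > 0"
  proof (rule ccontr)
    assume "\<not> xc p > 0"
    hence "xc p * tan \<theta> \<le> 0" using t by (simp add: mult_nonpos_nonneg less_imp_le)
    thus False using h by linarith
  qed
  show "\<bar>yc p\<bar> \<le> tan \<theta> * xc p" using h by (simp add: mult.commute)
qed

theorem lemma2p5:
  fixes \<alpha> :: real
  assumes "\<alpha> > 0" and "is_distance (d_alpha \<alpha>)"
  shows "\<exists>\<theta>1. 0 < \<theta>1 \<and> \<theta>1 < pi / 8 \<and>
    (\<forall>\<theta>. 0 < \<theta> \<and> \<theta> < \<theta>1 \<longrightarrow>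
      (\<forall>p q. zc q \<le> 0 \<and> zc p \<le> 0 \<and> rho q \<le> rho p \<and>
             p \<in> cone \<theta> \<and> q \<in> cone \<theta> \<and>
             q \<notin> hball \<alpha> p (rr \<alpha> p) \<and> p \<notin> hball \<alpha> q (rr \<alpha> q)
         \<longrightarrow> zc q < 2 * zc p \<and> rho q < rho p * cos (2 * \<theta>)))"
proof -
  define t where "t = 1 / (8*(\<alpha>+1))"
  have t0: "t > 0" using assms(1) by (simp add: t_def)
  define \<theta>1 where "\<theta>1 = min (pi/16) (arctan t)"
  have "0 < \<theta>1" using t0 pi_gt_zero by (simp add: \<theta>1_def)
  moreover have "\<theta>1 < pi/8"
  proof -
    have "\<theta>1 \<le> pi/16" by (simp add: \<theta>1_def)
    thus ?thesis using pi_gt_zero by linarith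
  qed
  moreover have "\<forall>\<theta>. 0 < \<theta> \<and> \<theta> < \<theta>1 \<longrightarrow>
      (\<forall>p q. zc q \<le> 0 \<and> zc p \<le> 0 \<and> rho q \<le> rho p \<and>
             p \<in> cone \<theta> \<and> q \<in> cone \<theta> \<and>
             q \<notin> hball \<alpha> p (rr \<alpha> p) \<and> p \<notin> hball \<alpha> q (rr \<alpha> q)
         \<longrightarrow> zc q < 2 * zc p \<and> rho q < rho p * cos (2 * \<theta>))"
  proof (intro allI impI, elim conjE)
    fix \<theta> p q
    assume th0: "0 < \<theta>" and th1: "\<theta> < \<theta>1" and zq: "zc q \<le> 0" and zp: "zc p \<le> 0"
      and rhoqp: "rho q \<le> rho p" and pc: "p \<in> cone \<theta>" and qc: "q \<in> cone \<theta>"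
      and qn: "q \<notin> hball \<alpha> p (rr \<alpha> p)" and pn: "p \<notin> hball \<alpha> q (rr \<alpha> q)"
    have "\<theta>1 \<le> pi/16" by (simp add: \<theta>1_def)
    hence thpi: "\<theta> < pi/2" using th1 pi_gt_zero by linarith
    define T where "T = tan \<theta>"
    have T0: "T > 0" unfolding T_def using th0 thpi by (intro tan_gt_zero)
    have "tan \<theta> < tan (arctan t)" using th0 th1 arctan_ubound[of t]
      by (intro tan_monotone) (auto simp: \<theta>1_def)
    hence Tt: "T \<le> t" by (simp add: T_def tan_arctan)
    have Tb: "8*T*(\<alpha>+1) \<le> 1"
    proof -
      have "8*T*(\<alpha>+1) \<le> 8*t*(\<alpha>+1)" using Tt assms(1) by (intro mult_right_mono) simp_all
      also have "\<dots> = 1" using assms(1) by (simp add: t_def)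
      finally show ?thesis .
    qed
    obtain x1 y1 z1 where p: "p = (x1,y1,z1)" by (cases p) auto
    obtain x2 y2 z2 where q: "q = (x2,y2,z2)" by (cases q) auto
    have x1: "x1 > 0" and y1: "\<bar>y1\<bar> \<le> T*x1" using cone_pos[OF pc th0 thpi] by (simp_all add: p xc_def yc_def T_def)
    have x2: "x2 > 0" and y2: "\<bar>y2\<bar> \<le> T*x2" using cone_pos[OF qc th0 thpi] by (simp_all add: q xc_def yc_def T_def)
    have na: "x1^2+y1^2 > 0" using x1 by (simp add: add_pos_nonneg)
    have nb: "x2^2+y2^2 > 0" using x2 by (simp add: add_pos_nonneg)
    define N where "N = rr \<alpha> p"
    define M where "M = rr \<alpha> q"
    have NA: "N > 0 \<and> (x1^2+y1^2)*N^2 + z1^2 \<le> \<alpha>^2*N^4"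
      using norm_attained[OF assms(1) na, of z1] by (simp add: N_def rr_def p)
    have MA: "M > 0 \<and> (x2^2+y2^2)*M^2 + z2^2 \<le> \<alpha>^2*M^4"
      using norm_attained[OF assms(1) nb, of z2] by (simp add: M_def rr_def q)
    have dq: "d_alpha \<alpha> q p > N" using qn by (simp add: hball_def N_def)
    have dp: "d_alpha \<alpha> p q > M" using pn by (simp add: hball_def M_def)
    have e1: "hmult (hinv q) p = (x1-x2, y1-y2, (-z2) - (-z1) + (x1*y2-y1*x2)/2)"
      by (simp add: p q hmult_def hinv_def field_simps)
    have e2: "hmult (hinv p) q = (x2-x1, y2-y1, (-z1) - (-z2) - (x1*y2-y1*x2)/2)"
      by (simp add: p q hmult_def hinv_def field_simps)
    have cp: "((x1-x2)^2+(y1-y2)^2)*N^2 + ((-z2) - (-z1) + (x1*y2-y1*x2)/2)^2 > \<alpha>^2*N^4"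
      using dist_gt[OF assms(1) _ dq e1] NA by simp
    have cq: "((x2-x1)^2+(y2-y1)^2)*M^2 + ((-z1) - (-z2) - (x1*y2-y1*x2)/2)^2 > \<alpha>^2*M^4"
      using dist_gt[OF assms(1) _ dp e2] MA by simp
    have rr': "x2^2+y2^2 \<le> x1^2+y1^2" using rhoqp by (simp add: rho_def p q xc_def yc_def)
    have Np: "(x1^2+y1^2)*N^2 + (-z1)^2 \<le> \<alpha>^2*N^4" using NA by simp
    have Mq: "(x2^2+y2^2)*M^2 + (-z2)^2 \<le> \<alpha>^2*M^4" using MA by simp
    have Z1: "-z1 \<ge> 0" using zp by (simp add: p zc_def)
    have Z2: "-z2 \<ge> 0" using zq by (simp add: q zc_def)
    have res: "-z2 > 2*(-z1) \<and> sqrt (x2^2+y2^2) < (1-2*T^2) * sqrt (x1^2+y1^2)"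
      using core[OF T0 Tb assms(1) x1 x2 y1 y2 Z1 Z2 rr' _ _ Np Mq cp cq] NA MA by blast
    have cb: "1 - 2*T^2 \<le> cos (2*\<theta>)" unfolding T_def using th0 thpi by (rule tan_bound)
    have "(1-2*T^2) * sqrt (x1^2+y1^2) \<le> cos (2*\<theta>) * sqrt (x1^2+y1^2)"
      using cb by (intro mult_right_mono) simp_all
    thus "zc q < 2 * zc p \<and> rho q < rho p * cos (2 * \<theta>)"
      using res by (simp add: p q zc_def rho_def xc_def yc_def mult.commute)
  qed
  ultimately show ?thesis by blast
qed

end
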